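(* Let $\kappa\ge2$ and let $P$ be a tensor in $\mathrm{EE}_\kappa(\psi^+)$ for $\psi^+=((a,b),c)$. Then for all $k\in[\kappa]$ the $\kappa\times\kappa$ matrices $$Q^a_{\cdot\cdot k}=P_{+\cdot\cdot}\operatorname{Cof}(P_{\cdot+\cdot})^TP_{\cdot\cdot k}\quad\text{and}\quad Q^b_{\cdot\cdot k}=P_{\cdot\cdot k}\operatorname{Cof}(P_{+\cdot\cdot})P_{\cdot+\cdot}^T$$ are symmetric.
   Context: A $\kappa$-state site pattern probability tensor on a taxon set $X$, $|X|=n$, is an $n$-way $\kappa\times\cdots\times\kappa$ array with one index per taxon, non-negative entries summing to 1. For $Y\subseteq X$, $P_Y$ is the marginalization to $Y$; $\psi^+|_Y$ the induced rooted subtree; a 2-clade is a pair of leaves that are exactly the leaf descendants of some vertex. $\mathrm{UE}_\kappa(\psi^+)$ is the set of such tensors $P$ such that for every $Y\subseteq X$ and every 2-clade $\{x,y\}$ of $\psi^+|_Y$, $P_Y$ is invariant under exchanging the $x$ and $y$ indices. For an $n$-way tensor $P$ and a $\kappa\times\kappa$ matrix $M$, $P*_kM$ is the tensor whose entry at $(i_1,\dots,i_n)$ is the $i_k$-th entry of the row vector $vM$, where $v$ is the vector obtained from $P$ by fixing the $\ell$-th index to $i_\ell$ for all $\ell\neq k$; and $P*(M_1,\dots,M_n)=(\cdots((P*_1M_1)*_2M_2)\cdots)*_nM_n$. The extended exchangeable model $\mathrm{EE}_\kappa(\psi^+)$ is the set of $\kappa$-state site pattern probability tensors $P$ on $X$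 for which there exist non-singular $\kappa\times\kappa$ Markov matrices $M_1,\dots,M_n$ and a non-negative array $\tilde P\in\mathrm{UE}_\kappa(\psi^+)$ with $P*(M_1,\dots,M_n)=\tilde P$. For a 3-way tensor $P=(p_{ijk})$ with indices ordered $a,b,c$: $P_{+\cdot\cdot}$ is the $\kappa\times\kappa$ matrix with $(j,k)$-entry $\sum_i p_{ijk}$; $P_{\cdot+\cdot}$ has $(i,k)$-entry $\sum_j p_{ijk}$; $P_{\cdot\cdot+}$ has $(i,j)$-entry $\sum_kp_{ijk}$; $P_{\cdot\cdot k}$ is the slice with $(i,j)$-entry $p_{ijk}$. $A^T$ is the transpose and $\operatorname{Cof}(A)$ is the matrix of cofactors of a square matrix $A$ (so $\operatorname{Cof}(A)^T$ is the adjugate of $A$). *)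

theory Defs
  imports "Jordan_Normal_Form.Determinant"
begin

(* States are 0..<\<kappa>; a 3-way tensor on taxa a,b,c (index order a,b,c) is a
   function nat \<Rightarrow> nat \<Rightarrow> nat \<Rightarrow> real, only entries with indices < \<kappa> matter. *)
type_synonym tensor3 = "nat \<Rightarrow> nat \<Rightarrow> nat \<Rightarrow> real"

definition prob_tensor3 :: "nat \<Rightarrow> tensor3 \<Rightarrow> bool" where
  "prob_tensor3 \<kappa> P \<longleftrightarrow>
     (\<forall>i<\<kappa>. \<forall>j<\<kappa>. \<forall>k<\<kappa>. 0 \<le> P i j k) \<and>
     (\<Sum>i<\<kappa>. \<Sum>j<\<kappa>. \<Sum>k<\<kappa>. P i j k) = 1"

definition markov_mat :: "nat \<Rightarrow> real mat \<Rightarrow> bool" where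
  "markov_mat \<kappa> M \<longleftrightarrow> M \<in> carrier_mat \<kappa> \<kappa> \<and>
     (\<forall>i<\<kappa>. \<forall>j<\<kappa>. 0 \<le> M $$ (i,j)) \<and>
     (\<forall>i<\<kappa>. (\<Sum>j<\<kappa>. M $$ (i,j)) = 1)"

definition act1 :: "nat \<Rightarrow> tensor3 \<Rightarrow> real mat \<Rightarrow> tensor3" where
  "act1 \<kappa> P M = (\<lambda>i j k. \<Sum>l<\<kappa>. P l j k * M $$ (l,i))"
definition act2 :: "nat \<Rightarrow> tensor3 \<Rightarrow> real mat \<Rightarrow> tensor3" where
  "act2 \<kappa> P M = (\<lambda>i j k. \<Sum>l<\<kappa>. P i l k * M $$ (l,j))"
definition act3 :: "nat \<Rightarrow> tensor3 \<Rightarrow> real mat \<Rightarrow> tensor3" where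
  "act3 \<kappa> P M = (\<lambda>i j k. \<Sum>l<\<kappa>. P i j l * M $$ (l,k))"

definition act_all :: "nat \<Rightarrow> tensor3 \<Rightarrow> real mat \<Rightarrow> real mat \<Rightarrow> real mat \<Rightarrow> tensor3" where
  "act_all \<kappa> P M1 M2 M3 = act3 \<kappa> (act2 \<kappa> (act1 \<kappa> P M1) M2) M3"

(* UE_\<kappa>(((a,b),c)), unfolded over all Y \<subseteq> {a,b,c}:
   Y = {a,b,c}: 2-clade {a,b};  Y = {a,b}: 2-clade {a,b};
   Y = {a,c}: 2-clade {a,c};    Y = {b,c}: 2-clade {b,c};
   |Y| \<le> 1: no 2-clades. *)
definition UE_abc :: "nat \<Rightarrow> tensor3 \<Rightarrow> bool" where
  "UE_abc \<kappa> P \<longleftrightarrow> prob_tensor3 \<kappa> P \<and>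
     (\<forall>i<\<kappa>. \<forall>j<\<kappa>. \<forall>k<\<kappa>. P i j k = P j i k) \<and>
     (\<forall>i<\<kappa>. \<forall>j<\<kappa>. (\<Sum>k<\<kappa>. P i j k) = (\<Sum>k<\<kappa>. P j i k)) \<and>
     (\<forall>i<\<kappa>. \<forall>k<\<kappa>. (\<Sum>j<\<kappa>. P i j k) = (\<Sum>j<\<kappa>. P k j i)) \<and>
     (\<forall>j<\<kappa>. \<forall>k<\<kappa>. (\<Sum>i<\<kappa>. P i j k) = (\<Sum>i<\<kappa>. P i k j))"

definition EE_abc :: "nat \<Rightarrow> tensor3 \<Rightarrow> bool" where
  "EE_abc \<kappa> P \<longleftrightarrow> prob_tensor3 \<kappa> P \<and>
     (\<exists>M1 M2 M3 Pt. markov_mat \<kappa> M1 \<and> det M1 \<noteq> 0 \<and>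
        markov_mat \<kappa> M2 \<and> det M2 \<noteq> 0 \<and>
        markov_mat \<kappa> M3 \<and> det M3 \<noteq> 0 \<and>
        UE_abc \<kappa> Pt \<and>
        (\<forall>i<\<kappa>. \<forall>j<\<kappa>. \<forall>k<\<kappa>. act_all \<kappa> P M1 M2 M3 i j k = Pt i j k))"

definition marg1 :: "nat \<Rightarrow> tensor3 \<Rightarrow> real mat" where
  "marg1 \<kappa> P = mat \<kappa> \<kappa> (\<lambda>(j,k). \<Sum>i<\<kappa>. P i j k)"
definition marg2 :: "nat \<Rightarrow> tensor3 \<Rightarrow> real mat" where
  "marg2 \<kappa> P = mat \<kappa> \<kappa> (\<lambda>(i,k). \<Sum>j<\<kappa>. P i j k)"
definition marg3 :: "nat \<Rightarrow> tensor3 \<Rightarrow> real mat" where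
  "marg3 \<kappa> P = mat \<kappa> \<kappa> (\<lambda>(i,j). \<Sum>k<\<kappa>. P i j k)"
definition slice3 :: "nat \<Rightarrow> tensor3 \<Rightarrow> nat \<Rightarrow> real mat" where
  "slice3 \<kappa> P k = mat \<kappa> \<kappa> (\<lambda>(i,j). P i j k)"

definition Cof :: "real mat \<Rightarrow> real mat" where
  "Cof A = mat (dim_row A) (dim_col A) (\<lambda>(i,j). cofactor A i j)"

end

theory Submission imports Defs begin

lemma adj_row_scalar:
  assumes A: "(A::real mat) \<in> carrier_mat n n" and b: "b \<in> carrier_vec n" and k: "k < n"
  shows "row (adj_mat A) k \<bullet> b = det (replace_col A b k)"
proof -
  let ?Ab = "replace_col A b k"
  have Ab: "?Ab \<in> carrier_mat n n" using A by (auto simp: replace_col_def)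
  show ?thesis unfolding scalar_prod_def using b k A
    by (subst laplace_expansion_column[OF Ab k], auto intro!: sum.cong arg_cong[of _ _ det]
      arg_cong[of _ _ "\<lambda> x. _ * x"] eq_matI
      simp: replace_col_def adj_mat_def Matrix.row_def cofactor_def mat_delete_def ac_simps)
qed

lemma replace_col_mult:
  assumes X: "(X::real mat) \<in> carrier_mat n n" and Y: "Y \<in> carrier_mat n n"
    and v: "v \<in> carrier_vec n" and i: "i < n"
  shows "replace_col (X*Y) (X *\<^sub>v v) i = X * replace_col Y v i"
proof (rule eq_matI)
  fix r c assume r: "r < dim_row (X * replace_col Y v i)" and c: "c < dim_col (X * replace_col Y v i)"
  have rc: "r < n" "c < n" using r c X Y by (auto simp: replace_col_def)
  have col: "col (replace_col Y v i) c = (if c = i then v else col Y c)"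
    using rc Y v by (auto simp: replace_col_def)
  show "replace_col (X * Y) (X *\<^sub>v v) i $$ (r, c) = (X * replace_col Y v i) $$ (r, c)"
    using rc X Y v col by (auto simp: replace_col_def)
qed (insert X Y, auto simp: replace_col_def)

lemma adj_mult_left:
  assumes X: "(X::real mat) \<in> carrier_mat n n" and Y: "Y \<in> carrier_mat n n" and d: "det X \<noteq> 0"
  shows "adj_mat (X*Y) = adj_mat Y * adj_mat X"
proof (rule eq_matI)
  have aX: "adj_mat X \<in> carrier_mat n n" using adj_mat[OF X] by auto
  have aY: "adj_mat Y \<in> carrier_mat n n" using adj_mat[OF Y] by auto
  have XY: "X * Y \<in> carrier_mat n n" using X Y by auto
  fix i j assume i: "i < dim_row (adj_mat Y * adj_mat X)" and j: "j < dim_col (adj_mat Y * adj_mat X)"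
  hence ij: "i < n" "j < n" using aX aY by auto
  define w where "w = col (adj_mat X) j"
  define v where "v = (1 / det X) \<cdot>\<^sub>v w"
  have w: "w \<in> carrier_vec n" using aX ij unfolding w_def by auto
  have v: "v \<in> carrier_vec n" using w unfolding v_def by auto
  have "X *\<^sub>v w = col (X * adj_mat X) j" using col_mult2[OF X aX ij(2)] unfolding w_def by simp
  also have "\<dots> = det X \<cdot>\<^sub>v unit_vec n j" using adj_mat(2)[OF X] ij by auto
  finally have Xw: "X *\<^sub>v w = det X \<cdot>\<^sub>v unit_vec n j" .
  have Xv: "X *\<^sub>v v = unit_vec n j" unfolding v_def
    using Xw d X w by (auto simp: mult_mat_vec)
  have "adj_mat (X*Y) $$ (i,j) = row (adj_mat (X*Y)) i \<bullet> unit_vec n j"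
    using adj_mat[OF XY] ij by auto
  also have "\<dots> = det (replace_col (X*Y) (X *\<^sub>v v) i)"
    using adj_row_scalar[OF XY _ ij(1)] Xv by auto
  also have "\<dots> = det X * det (replace_col Y v i)"
    by (subst replace_col_mult[OF X Y v ij(1)], rule det_mult[OF X], insert Y, auto simp: replace_col_def)
  also have "\<dots> = det X * (row (adj_mat Y) i \<bullet> v)" using adj_row_scalar[OF Y v ij(1)] by simp
  also have "\<dots> = row (adj_mat Y) i \<bullet> w" unfolding v_def using w aY ij d
    by (auto simp: scalar_prod_smult_right)
  also have "\<dots> = (adj_mat Y * adj_mat X) $$ (i,j)" unfolding w_def using aX aY ij by auto
  finally show "adj_mat (X * Y) $$ (i, j) = (adj_mat Y * adj_mat X) $$ (i, j)" .
qed (insert X Y, auto simp: adj_mat_def)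

lemma adj_transpose:
  assumes A: "(A::real mat) \<in> carrier_mat n n"
  shows "adj_mat (transpose_mat A) = transpose_mat (adj_mat A)"
proof (rule eq_matI)
  fix i j assume "i < dim_row (transpose_mat (adj_mat A))" "j < dim_col (transpose_mat (adj_mat A))"
  hence ij: "i < n" "j < n" using A by (auto simp: adj_mat_def)
  have "det (mat_delete A\<^sup>T j i) = det ((mat_delete A\<^sup>T j i)\<^sup>T)"
    by (subst det_transpose, insert A, auto simp: mat_delete_def)
  also have "(mat_delete A\<^sup>T j i)\<^sup>T = mat_delete A i j"
    unfolding mat_delete_def using A by auto
  finally show "adj_mat (transpose_mat A) $$ (i, j) = transpose_mat (adj_mat A) $$ (i, j)"
    using ij A by (auto simp: adj_mat_def cofactor_def ac_simps)
qed (insert A, auto simp: adj_mat_def)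

lemma adj_mult_right:
  assumes Y: "(Y::real mat) \<in> carrier_mat n n" and Z: "Z \<in> carrier_mat n n" and d: "det Z \<noteq> 0"
  shows "adj_mat (Y*Z) = adj_mat Z * adj_mat Y"
proof -
  have "transpose_mat (adj_mat (Y*Z)) = adj_mat (transpose_mat (Y*Z))"
    using adj_transpose[of "Y*Z" n] Y Z by auto
  also have "\<dots> = adj_mat (transpose_mat Z * transpose_mat Y)" using transpose_mult[OF Y Z] by simp
  also have "\<dots> = adj_mat (transpose_mat Y) * adj_mat (transpose_mat Z)"
    by (rule adj_mult_left, insert Y Z d det_transpose[OF Z], auto)
  also have "\<dots> = transpose_mat (adj_mat Y) * transpose_mat (adj_mat Z)"
    using adj_transpose[OF Y] adj_transpose[OF Z] by simp
  also have "\<dots> = transpose_mat (adj_mat Z * adj_mat Y)"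
    using transpose_mult[OF adj_mat(1)[OF Z] adj_mat(1)[OF Y]] by simp
  finally show ?thesis by (metis transpose_transpose)
qed

lemma Cof_adj: "(A::real mat) \<in> carrier_mat n n \<Longrightarrow> Cof A = transpose_mat (adj_mat A)"
  by (rule eq_matI, auto simp: Cof_def adj_mat_def)


definition eqn :: "nat \<Rightarrow> tensor3 \<Rightarrow> tensor3 \<Rightarrow> bool" where
  "eqn n Q R \<longleftrightarrow> (\<forall>i<n. \<forall>j<n. \<forall>k<n. Q i j k = R i j k)"

lemma eqn_trans: "eqn n Q R \<Longrightarrow> eqn n R S \<Longrightarrow> eqn n Q S" unfolding eqn_def by auto
lemma eqn_sym: "eqn n Q R \<Longrightarrow> eqn n R Q" unfolding eqn_def by auto
lemma eqn_refl: "eqn n Q Q" unfolding eqn_def by auto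

lemma mult_entry:
  assumes "(X::real mat) \<in> carrier_mat n m" "Y \<in> carrier_mat m p" "i < n" "j < p"
  shows "(X*Y) $$ (i,j) = (\<Sum>l<m. X $$ (i,l) * Y $$ (l,j))"
  using assms by (auto simp: scalar_prod_def atLeast0LessThan intro!: sum.cong)

lemma cong1: "eqn n Q R \<Longrightarrow> eqn n (act1 n Q M) (act1 n R M)"
  unfolding eqn_def act1_def by auto
lemma cong2: "eqn n Q R \<Longrightarrow> eqn n (act2 n Q M) (act2 n R M)"
  unfolding eqn_def act2_def by auto
lemma cong3: "eqn n Q R \<Longrightarrow> eqn n (act3 n Q M) (act3 n R M)"
  unfolding eqn_def act3_def by auto

lemma comp1: assumes "M \<in> carrier_mat n n" "A \<in> carrier_mat n n"
  shows "eqn n (act1 n (act1 n Q M) A) (act1 n Q (M*A))"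
proof -
  have e: "\<And>a b. a<n \<Longrightarrow> b<n \<Longrightarrow> (M*A)$$(a,b) = (\<Sum>l<n. M$$(a,l)*A$$(l,b))"
    using mult_entry assms by blast
  show ?thesis unfolding eqn_def act1_def
  proof (intro allI impI)
    fix i j k assume ijk: "i<n" "j<n" "k<n"
    have "(\<Sum>l<n. Q l j k * (M*A)$$(l,i)) = (\<Sum>l<n. Q l j k * (\<Sum>m<n. M$$(l,m)*A$$(m,i)))"
      by (rule sum.cong, auto simp: e ijk)
    thus "(\<Sum>l<n. (\<Sum>l'<n. Q l' j k * M $$ (l', l)) * A $$ (l, i)) = (\<Sum>l<n. Q l j k * (M*A)$$(l,i))"
      unfolding sum_distrib_left sum_distrib_right by (subst sum.swap) (simp add: mult_ac)
  qed
qed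
lemma comp2: assumes "M \<in> carrier_mat n n" "A \<in> carrier_mat n n"
  shows "eqn n (act2 n (act2 n Q M) A) (act2 n Q (M*A))"
proof -
  have e: "\<And>a b. a<n \<Longrightarrow> b<n \<Longrightarrow> (M*A)$$(a,b) = (\<Sum>l<n. M$$(a,l)*A$$(l,b))"
    using mult_entry assms by blast
  show ?thesis unfolding eqn_def act2_def
  proof (intro allI impI)
    fix i j k assume ijk: "i<n" "j<n" "k<n"
    have "(\<Sum>l<n. Q i l k * (M*A)$$(l,j)) = (\<Sum>l<n. Q i l k * (\<Sum>m<n. M$$(l,m)*A$$(m,j)))"
      by (rule sum.cong, auto simp: e ijk)
    thus "(\<Sum>l<n. (\<Sum>l'<n. Q i l' k * M $$ (l', l)) * A $$ (l, j)) = (\<Sum>l<n. Q i l k * (M*A)$$(l,j))"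
      unfolding sum_distrib_left sum_distrib_right by (subst sum.swap) (simp add: mult_ac)
  qed
qed
lemma comp3: assumes "M \<in> carrier_mat n n" "A \<in> carrier_mat n n"
  shows "eqn n (act3 n (act3 n Q M) A) (act3 n Q (M*A))"
proof -
  have e: "\<And>a b. a<n \<Longrightarrow> b<n \<Longrightarrow> (M*A)$$(a,b) = (\<Sum>l<n. M$$(a,l)*A$$(l,b))"
    using mult_entry assms by blast
  show ?thesis unfolding eqn_def act3_def
  proof (intro allI impI)
    fix i j k assume ijk: "i<n" "j<n" "k<n"
    have "(\<Sum>l<n. Q i j l * (M*A)$$(l,k)) = (\<Sum>l<n. Q i j l * (\<Sum>m<n. M$$(l,m)*A$$(m,k)))"
      by (rule sum.cong, auto simp: e ijk)
    thus "(\<Sum>l<n. (\<Sum>l'<n. Q i j l' * M $$ (l', l)) * A $$ (l, k)) = (\<Sum>l<n. Q i j l * (M*A)$$(l,k))"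
      unfolding sum_distrib_left sum_distrib_right by (subst sum.swap) (simp add: mult_ac)
  qed
qed

lemma id1: "eqn n (act1 n Q (1\<^sub>m n)) Q"
  unfolding eqn_def act1_def by (auto simp: one_mat_def if_distrib cong: if_cong)
lemma id2: "eqn n (act2 n Q (1\<^sub>m n)) Q"
  unfolding eqn_def act2_def by (auto simp: one_mat_def if_distrib cong: if_cong)
lemma id3: "eqn n (act3 n Q (1\<^sub>m n)) Q"
  unfolding eqn_def act3_def by (auto simp: one_mat_def if_distrib cong: if_cong)

lemma comm12: "act1 n (act2 n Q M) A = act2 n (act1 n Q A) M"
  unfolding act1_def act2_def
  by (auto simp: sum_distrib_left sum_distrib_right mult_ac intro!: ext sum.swap)
lemma comm13: "act1 n (act3 n Q M) A = act3 n (act1 n Q A) M"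
  unfolding act1_def act3_def
  by (auto simp: sum_distrib_left sum_distrib_right mult_ac intro!: ext sum.swap)
lemma comm23: "act2 n (act3 n Q M) A = act3 n (act2 n Q A) M"
  unfolding act2_def act3_def
  by (auto simp: sum_distrib_left sum_distrib_right mult_ac intro!: ext sum.swap)


lemma cong_marg1: "eqn n Q R \<Longrightarrow> marg1 n Q = marg1 n R"
  unfolding eqn_def marg1_def by (auto intro!: eq_matI sum.cong)
lemma cong_marg2: "eqn n Q R \<Longrightarrow> marg2 n Q = marg2 n R"
  unfolding eqn_def marg2_def by (auto intro!: eq_matI sum.cong)
lemma cong_slice3: "eqn n Q R \<Longrightarrow> k < n \<Longrightarrow> slice3 n Q k = slice3 n R k"
  unfolding eqn_def slice3_def by (auto intro!: eq_matI sum.cong)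

lemma marg1_act2: assumes B: "B \<in> carrier_mat n n"
  shows "marg1 n (act2 n Q B) = transpose_mat B * marg1 n Q"
proof (rule eq_matI)
  fix j k assume "j < dim_row (transpose_mat B * marg1 n Q)" "k < dim_col (transpose_mat B * marg1 n Q)"
  hence jk: "j < n" "k < n" using B by (auto simp: marg1_def)
  have "(transpose_mat B * marg1 n Q) $$ (j,k) = (\<Sum>l<n. transpose_mat B $$ (j,l) * marg1 n Q $$ (l,k))"
    by (rule mult_entry, insert B jk, auto simp: marg1_def)
  also have "\<dots> = (\<Sum>l<n. B $$ (l,j) * (\<Sum>i<n. Q i l k))"
    by (rule sum.cong, insert B jk, auto simp: marg1_def)
  finally show "marg1 n (act2 n Q B) $$ (j, k) = (transpose_mat B * marg1 n Q) $$ (j, k)"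
    using jk unfolding marg1_def act2_def
    by (simp add: sum_distrib_left sum_distrib_right mult_ac, subst sum.swap, simp)
qed (insert B, auto simp: marg1_def)

lemma marg1_act3: assumes C: "C \<in> carrier_mat n n"
  shows "marg1 n (act3 n Q C) = marg1 n Q * C"
proof (rule eq_matI)
  fix j k assume "j < dim_row (marg1 n Q * C)" "k < dim_col (marg1 n Q * C)"
  hence jk: "j < n" "k < n" using C by (auto simp: marg1_def)
  have "(marg1 n Q * C) $$ (j,k) = (\<Sum>l<n. marg1 n Q $$ (j,l) * C $$ (l,k))"
    by (rule mult_entry, insert C jk, auto simp: marg1_def)
  also have "\<dots> = (\<Sum>l<n. (\<Sum>i<n. Q i j l) * C $$ (l,k))"
    by (rule sum.cong, insert C jk, auto simp: marg1_def)
  finally show "marg1 n (act3 n Q C) $$ (j, k) = (marg1 n Q * C) $$ (j, k)"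
    using jk unfolding marg1_def act3_def
    by (simp add: sum_distrib_left sum_distrib_right mult_ac, subst sum.swap, simp)
qed (insert C, auto simp: marg1_def)

lemma marg1_act1: assumes rs: "\<forall>l<n. (\<Sum>i<n. A $$ (l,i)) = 1"
  shows "marg1 n (act1 n Q A) = marg1 n Q"
proof (rule eq_matI)
  fix j k assume "j < dim_row (marg1 n Q)" "k < dim_col (marg1 n Q)"
  hence jk: "j < n" "k < n" by (auto simp: marg1_def)
  have "(\<Sum>i<n. \<Sum>l<n. Q l j k * A $$ (l, i)) = (\<Sum>l<n. \<Sum>i<n. Q l j k * A $$ (l, i))"
    by (rule sum.swap)
  also have "\<dots> = (\<Sum>l<n. Q l j k * (\<Sum>i<n. A $$ (l, i)))" by (simp add: sum_distrib_left)
  also have "\<dots> = (\<Sum>l<n. Q l j k)" by (rule sum.cong, auto simp: rs)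
  finally show "marg1 n (act1 n Q A) $$ (j, k) = marg1 n Q $$ (j, k)"
    using jk unfolding marg1_def act1_def by simp
qed (auto simp: marg1_def)

lemma marg2_act1: assumes A: "A \<in> carrier_mat n n"
  shows "marg2 n (act1 n Q A) = transpose_mat A * marg2 n Q"
proof (rule eq_matI)
  fix i k assume "i < dim_row (transpose_mat A * marg2 n Q)" "k < dim_col (transpose_mat A * marg2 n Q)"
  hence ik: "i < n" "k < n" using A by (auto simp: marg2_def)
  have "(transpose_mat A * marg2 n Q) $$ (i,k) = (\<Sum>l<n. transpose_mat A $$ (i,l) * marg2 n Q $$ (l,k))"
    by (rule mult_entry, insert A ik, auto simp: marg2_def)
  also have "\<dots> = (\<Sum>l<n. A $$ (l,i) * (\<Sum>j<n. Q l j k))"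
    by (rule sum.cong, insert A ik, auto simp: marg2_def)
  finally show "marg2 n (act1 n Q A) $$ (i, k) = (transpose_mat A * marg2 n Q) $$ (i, k)"
    using ik unfolding marg2_def act1_def
    by (simp add: sum_distrib_left sum_distrib_right mult_ac, subst sum.swap, simp)
qed (insert A, auto simp: marg2_def)

lemma marg2_act2: assumes rs: "\<forall>l<n. (\<Sum>i<n. B $$ (l,i)) = 1"
  shows "marg2 n (act2 n Q B) = marg2 n Q"
proof (rule eq_matI)
  fix i k assume "i < dim_row (marg2 n Q)" "k < dim_col (marg2 n Q)"
  hence ik: "i < n" "k < n" by (auto simp: marg2_def)
  have "(\<Sum>j<n. \<Sum>l<n. Q i l k * B $$ (l, j)) = (\<Sum>l<n. \<Sum>j<n. Q i l k * B $$ (l, j))"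
    by (rule sum.swap)
  also have "\<dots> = (\<Sum>l<n. Q i l k * (\<Sum>j<n. B $$ (l, j)))" by (simp add: sum_distrib_left)
  also have "\<dots> = (\<Sum>l<n. Q i l k)" by (rule sum.cong, auto simp: rs)
  finally show "marg2 n (act2 n Q B) $$ (i, k) = marg2 n Q $$ (i, k)"
    using ik unfolding marg2_def act2_def by simp
qed (auto simp: marg2_def)

lemma marg2_act3: assumes C: "C \<in> carrier_mat n n"
  shows "marg2 n (act3 n Q C) = marg2 n Q * C"
proof (rule eq_matI)
  fix i k assume "i < dim_row (marg2 n Q * C)" "k < dim_col (marg2 n Q * C)"
  hence ik: "i < n" "k < n" using C by (auto simp: marg2_def)
  have "(marg2 n Q * C) $$ (i,k) = (\<Sum>l<n. marg2 n Q $$ (i,l) * C $$ (l,k))"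
    by (rule mult_entry, insert C ik, auto simp: marg2_def)
  also have "\<dots> = (\<Sum>l<n. (\<Sum>j<n. Q i j l) * C $$ (l,k))"
    by (rule sum.cong, insert C ik, auto simp: marg2_def)
  finally show "marg2 n (act3 n Q C) $$ (i, k) = (marg2 n Q * C) $$ (i, k)"
    using ik unfolding marg2_def act3_def
    by (simp add: sum_distrib_left sum_distrib_right mult_ac, subst sum.swap, simp)
qed (insert C, auto simp: marg2_def)

lemma slice_act1: assumes A: "A \<in> carrier_mat n n"
  shows "slice3 n (act1 n Q A) k = transpose_mat A * slice3 n Q k"
proof (rule eq_matI)
  fix i j assume "i < dim_row (transpose_mat A * slice3 n Q k)" "j < dim_col (transpose_mat A * slice3 n Q k)"
  hence ij: "i < n" "j < n" using A by (auto simp: slice3_def)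
  have "(transpose_mat A * slice3 n Q k) $$ (i,j) = (\<Sum>l<n. transpose_mat A $$ (i,l) * slice3 n Q k $$ (l,j))"
    by (rule mult_entry, insert A ij, auto simp: slice3_def)
  also have "\<dots> = (\<Sum>l<n. Q l j k * A $$ (l,i))"
    by (rule sum.cong, insert A ij, auto simp: slice3_def)
  finally show "slice3 n (act1 n Q A) k $$ (i, j) = (transpose_mat A * slice3 n Q k) $$ (i, j)"
    using ij unfolding slice3_def act1_def by simp
qed (insert A, auto simp: slice3_def)

lemma slice_act2: assumes B: "B \<in> carrier_mat n n"
  shows "slice3 n (act2 n Q B) k = slice3 n Q k * B"
proof (rule eq_matI)
  fix i j assume "i < dim_row (slice3 n Q k * B)" "j < dim_col (slice3 n Q k * B)"
  hence ij: "i < n" "j < n" using B by (auto simp: slice3_def)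
  have "(slice3 n Q k * B) $$ (i,j) = (\<Sum>l<n. slice3 n Q k $$ (i,l) * B $$ (l,j))"
    by (rule mult_entry, insert B ij, auto simp: slice3_def)
  also have "\<dots> = (\<Sum>l<n. Q i l k * B $$ (l,j))"
    by (rule sum.cong, insert B ij, auto simp: slice3_def)
  finally show "slice3 n (act2 n Q B) k $$ (i, j) = (slice3 n Q k * B) $$ (i, j)"
    using ij unfolding slice3_def act2_def by simp
qed (insert B, auto simp: slice3_def)

lemma marg1_all: assumes "A \<in> carrier_mat n n" "B \<in> carrier_mat n n" "C \<in> carrier_mat n n"
  and rs: "\<forall>l<n. (\<Sum>i<n. A $$ (l,i)) = 1"
  shows "marg1 n (act_all n Q A B C) = transpose_mat B * marg1 n Q * C"
  unfolding act_all_def using assms by (simp add: marg1_act1 marg1_act2 marg1_act3)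

lemma marg2_all: assumes "A \<in> carrier_mat n n" "B \<in> carrier_mat n n" "C \<in> carrier_mat n n"
  and rs: "\<forall>l<n. (\<Sum>i<n. B $$ (l,i)) = 1"
  shows "marg2 n (act_all n Q A B C) = transpose_mat A * marg2 n Q * C"
  unfolding act_all_def using assms by (simp add: marg2_act1 marg2_act2 marg2_act3)

lemma slice_all: assumes "A \<in> carrier_mat n n" "B \<in> carrier_mat n n"
  shows "slice3 n (act_all n Q A B C) k = transpose_mat A * slice3 n (act3 n Q C) k * B"
  unfolding act_all_def using assms by (simp add: comm13[symmetric] comm23[symmetric] slice_act1 slice_act2)


lemma smult_smult_mat: "(a::real) \<cdot>\<^sub>m (b \<cdot>\<^sub>m A) = (a*b) \<cdot>\<^sub>m A"
  by (rule eq_matI, auto)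

lemma one_smult_mat': "(1::real) \<cdot>\<^sub>m A = A"
  by (rule eq_matI, auto)

lemma inv_markov:
  assumes M: "markov_mat n M" and d: "det M \<noteq> 0"
  defines "A \<equiv> (1 / det M) \<cdot>\<^sub>m adj_mat M"
  shows "A \<in> carrier_mat n n" "M * A = 1\<^sub>m n" "A * M = 1\<^sub>m n"
    "\<forall>l<n. (\<Sum>i<n. A $$ (l,i)) = 1" "det A \<noteq> 0"
proof -
  have Mc: "M \<in> carrier_mat n n" using M unfolding markov_mat_def by auto
  have aM: "adj_mat M \<in> carrier_mat n n" using adj_mat[OF Mc] by auto
  show Ac: "A \<in> carrier_mat n n" unfolding A_def using aM by auto
  show MA: "M * A = 1\<^sub>m n" unfolding A_def using adj_mat(2)[OF Mc] Mc aM d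
    by (simp add: mult_smult_distrib[OF Mc aM] smult_smult_mat one_smult_mat')
  show AM: "A * M = 1\<^sub>m n" unfolding A_def using adj_mat(3)[OF Mc] Mc aM d
    by (simp add: mult_smult_assoc_mat[OF aM Mc] smult_smult_mat one_smult_mat')
  show "\<forall>l<n. (\<Sum>i<n. A $$ (l,i)) = 1"
  proof (intro allI impI)
    fix l assume l: "l < n"
    have "(\<Sum>i<n. A $$ (l,i)) = (\<Sum>i<n. A $$ (l,i) * (\<Sum>j<n. M $$ (i,j)))"
      by (rule sum.cong, insert M, auto simp: markov_mat_def)
    also have "\<dots> = (\<Sum>j<n. \<Sum>i<n. A $$ (l,i) * M $$ (i,j))"
      by (simp add: sum_distrib_left, rule sum.swap)
    also have "\<dots> = (\<Sum>j<n. (A*M) $$ (l,j))"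
      by (rule sum.cong[OF refl], metis mult_entry[OF Ac Mc l] lessThan_iff)
    also have "\<dots> = (\<Sum>j<n. if l = j then 1 else 0)"
      by (rule sum.cong, insert l, auto simp: AM)
    also have "\<dots> = 1" using l by simp
    finally show "(\<Sum>i<n. A $$ (l,i)) = 1" .
  qed
  have "det M * det A = 1" using det_mult[OF Mc Ac] MA by simp
  thus "det A \<noteq> 0" by auto
qed

lemma mult_cancel:
  assumes "(X::real mat) \<in> carrier_mat n n" "Y \<in> carrier_mat n n" "X * Y = c \<cdot>\<^sub>m 1\<^sub>m n" "Z \<in> carrier_mat n m"
  shows "X * (Y * Z) = c \<cdot>\<^sub>m Z"
proof -
  have "X * (Y * Z) = (X * Y) * Z" using assms by (metis assoc_mult_mat)
  also have "\<dots> = (c \<cdot>\<^sub>m 1\<^sub>m n) * Z" by (simp only: assms(3))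
  also have "\<dots> = c \<cdot>\<^sub>m (1\<^sub>m n * Z)" by (rule mult_smult_assoc_mat, insert assms, auto)
  also have "\<dots> = c \<cdot>\<^sub>m Z" using assms by simp
  finally show ?thesis .
qed


lemma transpose_smult': "transpose_mat ((c::real) \<cdot>\<^sub>m X) = c \<cdot>\<^sub>m transpose_mat X"
  by (rule eq_matI, auto)

theorem proposition6p1:
  fixes \<kappa> :: nat and P :: tensor3 and k :: nat
  assumes "\<kappa> \<ge> 2" and "EE_abc \<kappa> P" and "k < \<kappa>"
  shows "transpose_mat (marg1 \<kappa> P * transpose_mat (Cof (marg2 \<kappa> P)) * slice3 \<kappa> P k)
           = marg1 \<kappa> P * transpose_mat (Cof (marg2 \<kappa> P)) * slice3 \<kappa> P k
       \<and> transpose_mat (slice3 \<kappa> P k * Cof (marg1 \<kappa> P) * transpose_mat (marg2 \<kappa> P))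
           = slice3 \<kappa> P k * Cof (marg1 \<kappa> P) * transpose_mat (marg2 \<kappa> P)"
proof -
  note kk = assms(3)
  obtain M1 M2 M3 Pt where mk1: "markov_mat \<kappa> M1" and d1: "det M1 \<noteq> 0"
    and mk2: "markov_mat \<kappa> M2" and d2: "det M2 \<noteq> 0"
    and mk3: "markov_mat \<kappa> M3" and d3: "det M3 \<noteq> 0"
    and UE: "UE_abc \<kappa> Pt"
    and eqPt: "\<forall>i<\<kappa>. \<forall>j<\<kappa>. \<forall>k<\<kappa>. act_all \<kappa> P M1 M2 M3 i j k = Pt i j k"
    using assms(2) unfolding EE_abc_def by blast
  have M1c: "M1 \<in> carrier_mat \<kappa> \<kappa>" using mk1 unfolding markov_mat_def by auto
  have M2c: "M2 \<in> carrier_mat \<kappa> \<kappa>" using mk2 unfolding markov_mat_def by auto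
  have M3c: "M3 \<in> carrier_mat \<kappa> \<kappa>" using mk3 unfolding markov_mat_def by auto
  define A where "A = (1 / det M1) \<cdot>\<^sub>m adj_mat M1"
  define B where "B = (1 / det M2) \<cdot>\<^sub>m adj_mat M2"
  define C where "C = (1 / det M3) \<cdot>\<^sub>m adj_mat M3"
  note iA = inv_markov[OF mk1 d1, folded A_def]
  note iB = inv_markov[OF mk2 d2, folded B_def]
  note iC = inv_markov[OF mk3 d3, folded C_def]
  have Ac: "A \<in> carrier_mat \<kappa> \<kappa>" and Bc: "B \<in> carrier_mat \<kappa> \<kappa>" and Cc: "C \<in> carrier_mat \<kappa> \<kappa>"
    using iA iB iC by auto
  have Pt_eq: "eqn \<kappa> Pt (act_all \<kappa> P M1 M2 M3)" using eqPt unfolding eqn_def by auto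
  have e1: "eqn \<kappa> (act_all \<kappa> Pt A B C) (act_all \<kappa> (act_all \<kappa> P M1 M2 M3) A B C)"
    unfolding act_all_def by (intro cong1 cong2 cong3, rule Pt_eq[unfolded act_all_def])
  have e2: "act_all \<kappa> (act_all \<kappa> P M1 M2 M3) A B C
     = act3 \<kappa> (act3 \<kappa> (act2 \<kappa> (act2 \<kappa> (act1 \<kappa> (act1 \<kappa> P M1) A) M2) B) M3) C"
    unfolding act_all_def by (simp only: comm12 comm13 comm23)
  define W where "W = act1 \<kappa> (act1 \<kappa> P M1) A"
  define V where "V = act2 \<kappa> W M2"
  have eW: "eqn \<kappa> W P" unfolding W_def
    using eqn_trans[OF comp1[OF M1c Ac, of P, unfolded iA(2)] id1] .
  have eV: "eqn \<kappa> (act2 \<kappa> V B) P" unfolding V_def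
    using eqn_trans[OF eqn_trans[OF comp2[OF M2c Bc, of W, unfolded iB(2)] id2] eW] .
  have e3: "eqn \<kappa> (act3 \<kappa> (act3 \<kappa> (act2 \<kappa> V B) M3) C) P"
    using eqn_trans[OF eqn_trans[OF comp3[OF M3c Cc, of "act2 \<kappa> V B", unfolded iC(2)] id3] eV] .
  have P_eq: "eqn \<kappa> P (act_all \<kappa> Pt A B C)"
    using eqn_sym[OF eqn_trans[OF e1 e3[unfolded V_def W_def, folded e2]]] .
  define T where "T = marg1 \<kappa> Pt"
  define S where "S = slice3 \<kappa> (act3 \<kappa> Pt C) k"
  have Tc: "T \<in> carrier_mat \<kappa> \<kappa>" unfolding T_def marg1_def by auto
  have Sc: "S \<in> carrier_mat \<kappa> \<kappa>" unfolding S_def slice3_def by auto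
  have m1: "marg1 \<kappa> P = transpose_mat B * T * C"
    unfolding T_def cong_marg1[OF P_eq] by (rule marg1_all[OF Ac Bc Cc], insert iA, auto)
  have m2': "marg2 \<kappa> P = transpose_mat A * marg2 \<kappa> Pt * C"
    unfolding cong_marg2[OF P_eq] by (rule marg2_all[OF Ac Bc Cc], insert iB, auto)
  have sl: "slice3 \<kappa> P k = transpose_mat A * S * B"
    unfolding S_def cong_slice3[OF P_eq kk] by (rule slice_all[OF Ac Bc])
  have sym: "\<forall>i<\<kappa>. \<forall>j<\<kappa>. \<forall>k<\<kappa>. Pt i j k = Pt j i k"
    and c4: "\<forall>j<\<kappa>. \<forall>k<\<kappa>. (\<Sum>i<\<kappa>. Pt i j k) = (\<Sum>i<\<kappa>. Pt i k j)"
    using UE unfolding UE_abc_def by auto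
  have TT: "transpose_mat T = T"
    by (rule eq_matI, insert c4, auto simp: T_def marg1_def)
  have mT: "marg2 \<kappa> Pt = T"
  proof (rule eq_matI)
    fix i j assume "i < dim_row T" "j < dim_col T"
    hence ij: "i < \<kappa>" "j < \<kappa>" unfolding T_def marg1_def by auto
    have "(\<Sum>l<\<kappa>. Pt i l j) = (\<Sum>l<\<kappa>. Pt l i j)" by (rule sum.cong, insert sym ij, auto)
    thus "marg2 \<kappa> Pt $$ (i, j) = T $$ (i, j)" using ij unfolding T_def marg1_def marg2_def by simp
  qed (auto simp: T_def marg1_def marg2_def)
  have m2: "marg2 \<kappa> P = transpose_mat A * T * C" using m2' mT by simp
  have ST: "transpose_mat S = S"
  proof (rule eq_matI)
    fix i j assume "i < dim_row S" "j < dim_col S"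
    hence ij: "i < \<kappa>" "j < \<kappa>" unfolding S_def slice3_def by auto
    have "(\<Sum>l<\<kappa>. Pt i j l * C $$ (l,k)) = (\<Sum>l<\<kappa>. Pt j i l * C $$ (l,k))"
      by (rule sum.cong, insert sym ij, auto)
    thus "transpose_mat S $$ (i, j) = S $$ (i, j)" using ij unfolding S_def slice3_def act3_def by simp
  qed (auto simp: S_def slice3_def)
  have At: "transpose_mat A \<in> carrier_mat \<kappa> \<kappa>" and Bt: "transpose_mat B \<in> carrier_mat \<kappa> \<kappa>"
    and Ct: "transpose_mat C \<in> carrier_mat \<kappa> \<kappa>" using Ac Bc Cc by auto
  have dA: "det A \<noteq> 0" and dB: "det B \<noteq> 0" and dC: "det C \<noteq> 0" using iA iB iC by auto
  have dAt: "det (transpose_mat A) = det A" by (rule det_transpose[OF Ac])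
  have dCt: "det (transpose_mat C) = det C" by (rule det_transpose[OF Cc])
  note aAt = adj_mat[OF At] and aCt = adj_mat[OF Ct] and aB = adj_mat[OF Bc]
    and aC = adj_mat[OF Cc] and aT = adj_mat[OF Tc]
  note cs = Ac Bc Cc Tc Sc At Bt Ct aAt(1) aCt(1) aB(1) aC(1) aT(1) adj_mat(1)[OF Bt]
  note msd = mult_smult_distrib[of _ \<kappa> \<kappa> _ \<kappa>]
  note asc = assoc_mult_mat[of _ \<kappa> \<kappa> _ \<kappa> _ \<kappa>]
  have adjA: "adj_mat (transpose_mat A * T * C) = adj_mat C * (adj_mat T * adj_mat (transpose_mat A))"
    using adj_mult_right[of "transpose_mat A * T" \<kappa> C] adj_mult_left[OF At Tc] dAt dA dC cs by simp
  have Qa: "marg1 \<kappa> P * transpose_mat (Cof (marg2 \<kappa> P)) * slice3 \<kappa> P k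
      = transpose_mat B * (T * (C * (adj_mat C * (adj_mat T * (adj_mat (transpose_mat A) * (transpose_mat A * (S * B)))))))"
    unfolding m1 m2 sl using Cof_adj[of "transpose_mat A * T * C" \<kappa>] adjA cs by (simp add: asc)
  also have "\<dots> = transpose_mat B * (T * (C * (adj_mat C * (adj_mat T * (det A \<cdot>\<^sub>m (S * B))))))"
    using mult_cancel[OF aAt(1) At _, of "det A" "S * B" \<kappa>] aAt(3) dAt cs by simp
  also have "\<dots> = det A \<cdot>\<^sub>m (transpose_mat B * (T * (C * (adj_mat C * (adj_mat T * (S * B))))))"
    using cs by (simp add: msd)
  also have "\<dots> = det A \<cdot>\<^sub>m (transpose_mat B * (T * (det C \<cdot>\<^sub>m (adj_mat T * (S * B)))))"
    using mult_cancel[OF Cc aC(1) aC(2), of "adj_mat T * (S * B)" \<kappa>] cs by simp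
  also have "\<dots> = (det A * det C) \<cdot>\<^sub>m (transpose_mat B * (T * (adj_mat T * (S * B))))"
    using cs by (simp add: msd smult_smult_mat)
  also have "\<dots> = (det A * det C) \<cdot>\<^sub>m (transpose_mat B * (det T \<cdot>\<^sub>m (S * B)))"
    using mult_cancel[OF Tc aT(1) aT(2), of "S * B" \<kappa>] cs by simp
  also have "\<dots> = (det A * det C * det T) \<cdot>\<^sub>m (transpose_mat B * S * B)"
    using cs by (simp add: msd smult_smult_mat)
  finally have Qa': "marg1 \<kappa> P * transpose_mat (Cof (marg2 \<kappa> P)) * slice3 \<kappa> P k
      = (det A * det C * det T) \<cdot>\<^sub>m (transpose_mat B * S * B)" .
  have symA: "transpose_mat (transpose_mat B * S * B) = transpose_mat B * S * B"
  proof -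
    have "transpose_mat (transpose_mat B * S * B) = transpose_mat B * transpose_mat (transpose_mat B * S)"
      by (rule transpose_mult, insert cs, auto)
    also have "transpose_mat (transpose_mat B * S) = transpose_mat S * B"
      using transpose_mult[of "transpose_mat B" \<kappa> \<kappa> S \<kappa>] cs by simp
    finally show ?thesis using ST cs by (simp add: asc)
  qed
  have adjB: "adj_mat (transpose_mat B * T * C) = adj_mat C * (adj_mat T * adj_mat (transpose_mat B))"
    using adj_mult_right[of "transpose_mat B * T" \<kappa> C] adj_mult_left[OF Bt Tc] det_transpose[OF Bc] dB dC cs by simp
  have CofB: "Cof (marg1 \<kappa> P) = adj_mat B * (adj_mat T * adj_mat (transpose_mat C))"
  proof -
    have "Cof (marg1 \<kappa> P) = transpose_mat (adj_mat C * (adj_mat T * adj_mat (transpose_mat B)))"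
      unfolding m1 using Cof_adj[of "transpose_mat B * T * C" \<kappa>] adjB cs by simp
    also have "\<dots> = transpose_mat (adj_mat T * adj_mat (transpose_mat B)) * transpose_mat (adj_mat C)"
      by (rule transpose_mult, insert cs, auto)
    also have "\<dots> = transpose_mat (adj_mat (transpose_mat B)) * transpose_mat (adj_mat T) * transpose_mat (adj_mat C)"
      by (subst transpose_mult[of _ \<kappa> \<kappa> _ \<kappa>], insert cs, auto)
    also have "\<dots> = adj_mat B * adj_mat T * adj_mat (transpose_mat C)"
      using adj_transpose[OF Bc] adj_transpose[OF Tc] adj_transpose[OF Cc] TT by simp
    finally show ?thesis using cs by (simp add: asc)
  qed
  have tm2: "transpose_mat (marg2 \<kappa> P) = transpose_mat C * (T * A)"
  proof -
    have "transpose_mat (transpose_mat A * T * C) = transpose_mat C * transpose_mat (transpose_mat A * T)"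
      by (rule transpose_mult, insert cs, auto)
    also have "transpose_mat (transpose_mat A * T) = transpose_mat T * A"
      using transpose_mult[of "transpose_mat A" \<kappa> \<kappa> T \<kappa>] cs by simp
    finally show ?thesis unfolding m2 using TT by simp
  qed
  have Qb: "slice3 \<kappa> P k * Cof (marg1 \<kappa> P) * transpose_mat (marg2 \<kappa> P)
      = transpose_mat A * (S * (B * (adj_mat B * (adj_mat T * (adj_mat (transpose_mat C) * (transpose_mat C * (T * A)))))))"
    unfolding sl CofB tm2 using cs by (simp add: asc)
  also have "\<dots> = transpose_mat A * (S * (B * (adj_mat B * (adj_mat T * (det C \<cdot>\<^sub>m (T * A))))))"
    using mult_cancel[OF aCt(1) Ct _, of "det C" "T * A" \<kappa>] aCt(3) dCt cs by simp
  also have "\<dots> = det C \<cdot>\<^sub>m (transpose_mat A * (S * (B * (adj_mat B * (adj_mat T * (T * A))))))"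
    using cs by (simp add: msd)
  also have "\<dots> = det C \<cdot>\<^sub>m (transpose_mat A * (S * (B * (adj_mat B * (det T \<cdot>\<^sub>m A)))))"
    using mult_cancel[OF aT(1) Tc aT(3), of A \<kappa>] cs by simp
  also have "\<dots> = (det C * det T) \<cdot>\<^sub>m (transpose_mat A * (S * (B * (adj_mat B * A))))"
    using cs by (simp add: msd smult_smult_mat)
  also have "\<dots> = (det C * det T) \<cdot>\<^sub>m (transpose_mat A * (S * (det B \<cdot>\<^sub>m A)))"
    using mult_cancel[OF Bc aB(1) aB(2), of A \<kappa>] cs by simp
  also have "\<dots> = (det C * det T * det B) \<cdot>\<^sub>m (transpose_mat A * S * A)"
    using cs by (simp add: msd smult_smult_mat)
  finally have Qb': "slice3 \<kappa> P k * Cof (marg1 \<kappa> P) * transpose_mat (marg2 \<kappa> P)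
      = (det C * det T * det B) \<cdot>\<^sub>m (transpose_mat A * S * A)" .
  have symB: "transpose_mat (transpose_mat A * S * A) = transpose_mat A * S * A"
  proof -
    have "transpose_mat (transpose_mat A * S * A) = transpose_mat A * transpose_mat (transpose_mat A * S)"
      by (rule transpose_mult, insert cs, auto)
    also have "transpose_mat (transpose_mat A * S) = transpose_mat S * A"
      using transpose_mult[of "transpose_mat A" \<kappa> \<kappa> S \<kappa>] cs by simp
    finally show ?thesis using ST cs by (simp add: asc)
  qed
  show ?thesis unfolding Qa' Qb' transpose_smult' symA symB by simp
qed

end
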